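(* Let $\tau>\sigma$ be coprime positive integers with $\tau-\sigma\not\equiv2\pmod4$, and let $\rho_0\neq0$. Set $a=\tau+\sigma$, $b=\tau-\sigma$, $x=b/a\in\,]0,1[$, $k=\mathrm{round}(1/(2x))$, $\mu=\frac{\pi}{2}-k\pi x$ and $s=\mu/x$. Let $u_{\mathrm{asy}}\in\,]-\pi/2,\pi/2[$ be the unique solution of $u+\tan u=s$, and define $$\theta_{\mathrm{asy}}=\frac{\pi}{b}+\frac{2}{a}\bigl(u_{\mathrm{asy}}-s\bigr).$$ Let $\theta_c$ be the unique solution of $\dot q(\theta)=0$ near the slow-mode node $\pi/b$, i.e. with $\frac a2\theta_c=k\pi+u_c$ for some $u_c\in\,]-\pi/2,\pi/2[$, where $$\dot q(\theta)=\rho_0\Bigl(\sqrt{\tfrac{\tau}{\sigma}}\cos(\tau\theta)+\sqrt{\tfrac{\sigma}{\tau}}\cos(\sigma\theta)\Bigr).$$ Then $$|\theta_c-\theta_{\mathrm{asy}}|\le\frac{\pi^3}{a}x^2=\pi^3\frac{(\tau-\sigma)^2}{(\tau+\sigma)^3}.$$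
   Context: $\mathrm{round}(\cdot)$ denotes rounding to the nearest integer. The function $\dot q(\theta)$ is the velocity of the impulse response of $\ddot q+n\dot z+q=0$, $\ddot z-n\dot q+z=0$ at the resonance $\Omega_1/\Omega_2=\tau/\sigma$, reparametrised by $\theta=t/\sqrt{\tau\sigma}$. It is not the $\theta$-derivative of a function $q$. *)

theory Defs
  imports "HOL-Analysis.Analysis"
begin

definition qdot :: "real \<Rightarrow> real \<Rightarrow> real \<Rightarrow> real \<Rightarrow> real" where
  "qdot \<rho>0 \<tau> \<sigma> \<theta> =
     \<rho>0 * (sqrt (\<tau> / \<sigma>) * cos (\<tau> * \<theta>) + sqrt (\<sigma> / \<tau>) * cos (\<sigma> * \<theta>))"

end

theory Submission
  imports Defs
begin

lemma tan_cube_pos: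
  fixes w :: real assumes w0: "0 < w" and w1: "w \<le> pi/4"
  shows "0 \<le> tan w - w \<and> tan w - w \<le> 2 * w^3"
proof -
  have "\<And>t. 0 \<le> t \<Longrightarrow> t \<le> w \<Longrightarrow> DERIV (\<lambda>t. tan t - t) t :> (inverse ((cos t)\<^sup>2) - 1)"
  proof -
    fix t assume t: "0 \<le> t" "t \<le> w"
    have "cos t > 0" using t w1 pi_gt3 by (intro cos_gt_zero_pi) auto
    then show "DERIV (\<lambda>t. tan t - t) t :> (inverse ((cos t)\<^sup>2) - 1)"
      by (auto intro!: derivative_eq_intros)
  qed
  from MVT2[OF w0 this] obtain z where z: "0 < z" "z < w"
    and eq: "tan w - w - (tan 0 - 0) = (w - 0) * (inverse ((cos z)\<^sup>2) - 1)" by blast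
  have cz: "cos z > 0" using z w1 pi_gt3 by (intro cos_gt_zero_pi) auto
  have "cos (pi/4) \<le> cos z" using z w1 by (intro cos_monotone_0_pi_le) auto
  hence c2: "sqrt 2 / 2 \<le> cos z" by (simp add: cos_45)
  have "(sqrt 2 / 2)^2 \<le> (cos z)^2" using c2 by (intro power_mono) auto
  hence c3: "1/2 \<le> (cos z)^2" by (simp add: power_divide)
  have d: "inverse ((cos z)\<^sup>2) - 1 = (sin z)^2 / (cos z)^2"
    using cz by (simp add: field_simps sin_squared_eq)
  have "(sin z)^2 \<le> z^2" using sin_x_le_x[of z] sin_ge_zero[of z] z w1 pi_gt3
    by (intro power_mono) auto
  hence "(sin z)^2 / (cos z)^2 \<le> z^2 / (1/2)"
    using c3 by (intro frac_le) auto
  also have "\<dots> \<le> 2 * w^2" using z by (simp add: power_mono)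
  finally have "inverse ((cos z)\<^sup>2) - 1 \<le> 2 * w^2" using d by simp
  moreover have "0 \<le> inverse ((cos z)\<^sup>2) - 1" using d by simp
  ultimately show ?thesis using eq w0
    by (auto simp: power3_eq_cube power2_eq_square mult_left_mono mult.assoc)
qed

lemma tan_cube:
  fixes w :: real assumes "\<bar>w\<bar> \<le> pi/4"
  shows "\<bar>tan w - w\<bar> \<le> 2 * \<bar>w\<bar>^3"
proof -
  consider "w = 0" | "w > 0" | "w < 0" by linarith
  then show ?thesis
  proof cases
    case 2 then show ?thesis using tan_cube_pos[of w] assms by auto
  next
    case 3 then show ?thesis using tan_cube_pos[of "-w"] assms by auto
  qed simp
qed

theorem theorem4:
  fixes \<tau> \<sigma> :: nat and \<rho>0 u_asy \<theta>c :: real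
  assumes "0 < \<sigma>" and "\<sigma> < \<tau>" and "coprime \<tau> \<sigma>"
    and "(\<tau> - \<sigma>) mod 4 \<noteq> 2"
    and "\<rho>0 \<noteq> 0"
  defines "a \<equiv> real \<tau> + real \<sigma>"
    and "b \<equiv> real \<tau> - real \<sigma>"
  defines "x \<equiv> b / a"
  defines "k \<equiv> round (1 / (2 * x))"
  defines "\<mu> \<equiv> pi / 2 - real_of_int k * pi * x"
  defines "s \<equiv> \<mu> / x"
  assumes "u_asy \<in> {-pi/2<..<pi/2}" and "u_asy + tan u_asy = s"
    and "qdot \<rho>0 (real \<tau>) (real \<sigma>) \<theta>c = 0"
    and "a / 2 * \<theta>c - real_of_int k * pi \<in> {-pi/2<..<pi/2}"
  shows "\<bar>\<theta>c - (pi / b + 2 / a * (u_asy - s))\<bar> \<le> pi ^ 3 / a * x ^ 2"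
proof -
  define u where "u = a / 2 * \<theta>c - real_of_int k * pi"
  define v where "v = \<mu> - x * u"
  have a0: "a > 0" and b0: "b > 0" using assms(1,2) by (auto simp: a_def b_def)
  have x0: "x > 0" using a0 b0 by (simp add: x_def)
  have u1: "-pi/2 < u" "u < pi/2" using assms(15) by (auto simp: u_def)
  have ua: "-pi/2 < u_asy" "u_asy < pi/2" using assms(12) by auto
  have diff: "\<theta>c - (pi / b + 2 / a * (u_asy - s)) = 2 / a * (u - u_asy)"
    using a0 b0 unfolding u_def s_def \<mu>_def x_def by (simp add: field_simps)
  have mu_bd: "\<bar>\<mu>\<bar> \<le> pi * x / 2"
  proof -
    have "\<mu> = pi * x * (1 / (2 * x) - real_of_int k)" using x0 unfolding \<mu>_def
      by (simp add: field_simps)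
    hence "\<bar>\<mu>\<bar> = pi * x * \<bar>real_of_int k - 1 / (2 * x)\<bar>" using x0 by (simp add: abs_mult abs_minus_commute)
    also have "\<dots> \<le> pi * x * (1/2)" using of_int_round_abs_le[of "1 / (2 * x)"] x0
      unfolding k_def by (intro mult_left_mono) auto
    finally show ?thesis by simp
  qed
  show ?thesis
  proof (cases "x > 1/2")
    case True
    have "\<bar>u - u_asy\<bar> < pi" using u1 ua by auto
    hence "2 / a * \<bar>u - u_asy\<bar> \<le> 2 / a * pi" using a0 by (intro mult_left_mono) auto
    hence "\<bar>2 / a * (u - u_asy)\<bar> \<le> 2 / a * pi" unfolding abs_mult using a0 by simp
    also have "\<dots> \<le> pi ^ 3 / a * x ^ 2"
    proof -
      have "x^2 \<ge> (1/2)^2" using True by (intro power_mono) auto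
      moreover have "pi^2 \<ge> 3^2" using pi_gt3 by (intro power_mono) auto
      ultimately have "pi^2 * x^2 \<ge> 9 * (1/4)" by (intro mult_mono) (auto simp: power2_eq_square)
      hence "2 * pi \<le> pi * (pi^2 * x^2)" using pi_gt3 mult_left_mono[of 2 "pi^2*x^2" pi] by (simp add: mult.commute)
      thus ?thesis using a0 by (simp add: field_simps power3_eq_cube power2_eq_square)
    qed
    finally show ?thesis using diff by simp
  next
    case False
    hence xle: "x \<le> 1/2" by simp
    have key: "cos u * sin v - x * sin u * cos v = 0"
    proof -
      have q: "sqrt (real \<tau> / real \<sigma>) * cos (real \<tau> * \<theta>c) + sqrt (real \<sigma> / real \<tau>) * cos (real \<sigma> * \<theta>c) = 0"
        using assms(14) assms(5) by (simp add: qdot_def)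
      have st: "sqrt (real \<tau> * real \<sigma>) > 0" using assms(1,2) by simp
      have e1: "sqrt (real \<tau> / real \<sigma>) * sqrt (real \<tau> * real \<sigma>) = real \<tau>"
        using assms(1) by (simp add: real_sqrt_mult[symmetric])
      have e2: "sqrt (real \<sigma> / real \<tau>) * sqrt (real \<tau> * real \<sigma>) = real \<sigma>"
        using assms(1,2) by (simp add: real_sqrt_mult[symmetric])
      have q2: "real \<tau> * cos (real \<tau> * \<theta>c) + real \<sigma> * cos (real \<sigma> * \<theta>c) = 0"
        using arg_cong[OF q, of "\<lambda>z. z * sqrt (real \<tau> * real \<sigma>)"] e1 e2
        by (simp add: algebra_simps)
      define \<alpha> where "\<alpha> = a / 2 * \<theta>c"
      define \<beta> where "\<beta> = b / 2 * \<theta>c"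
      have t1: "real \<tau> * \<theta>c = \<alpha> + \<beta>" unfolding \<alpha>_def \<beta>_def a_def b_def by (simp add: field_simps)
      have t2: "real \<sigma> * \<theta>c = \<alpha> - \<beta>" unfolding \<alpha>_def \<beta>_def a_def b_def by (simp add: field_simps)
      have q3: "a * cos \<alpha> * cos \<beta> - b * sin \<alpha> * sin \<beta> = 0"
        using q2 unfolding t1 t2 cos_add cos_diff a_def b_def by (simp add: algebra_simps)
      have al: "\<alpha> = u + real_of_int k * pi" unfolding u_def \<alpha>_def by simp
      have be: "\<beta> = pi/2 - v"
        unfolding \<beta>_def v_def \<mu>_def u_def x_def using a0 by (simp add: field_simps)
      define c where "c = cos (real_of_int k * pi)"
      have sk: "sin (real_of_int k * pi) = 0" by (simp add: sin_times_pi_eq_0)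
      have cne: "c \<noteq> 0" using sin_cos_squared_add[of "real_of_int k * pi"] sk unfolding c_def by auto
      have ca: "cos \<alpha> = c * cos u" and sa: "sin \<alpha> = c * sin u"
        unfolding al c_def by (simp_all add: cos_add sin_add sk)
      have "c * (a * (cos u * sin v - x * sin u * cos v)) = 0"
        using q3 unfolding ca sa be cos_diff sin_diff
        using a0 unfolding x_def by (simp add: algebra_simps)
      thus ?thesis using a0 cne by simp
    qed
    have vbd0: "\<bar>v\<bar> < pi/2"
    proof -
      have "\<bar>x * u\<bar> < pi * x / 2" using u1 x0 by (auto simp: abs_mult abs_less_iff)
      hence "\<bar>v\<bar> < pi * x" using mu_bd unfolding v_def by linarith
      also have "\<dots> \<le> pi / 2" using xle pi_gt3 by (simp add: mult_left_mono)
      finally show ?thesis .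
    qed
    have cu: "cos u > 0" using u1 by (intro cos_gt_zero_pi) auto
    have cv: "cos v > 0" using vbd0 by (intro cos_gt_zero_pi) auto
    have tv: "tan v = x * tan u" using key cu cv
      by (simp add: tan_def field_simps)
    have vbd: "\<bar>v\<bar> \<le> pi * x / 2"
    proof (cases "v \<ge> 0")
      case True
      hence "tan v \<ge> 0" using vbd0 tan_gt_zero[of v] by (cases "v = 0") auto
      hence "tan u \<ge> 0" using tv x0 by (simp add: zero_le_mult_iff)
      hence "u \<ge> 0" using u1 tan_less_zero[of u] by (cases "u < 0") auto
      thus ?thesis using True mu_bd x0 unfolding v_def by (smt (verit) mult_nonneg_nonneg)
    next
      case False
      hence "tan v < 0" using vbd0 by (intro tan_less_zero) auto
      hence "tan u < 0" using tv x0 by (simp add: mult_less_0_iff)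
      hence "u < 0" using u1 tan_gt_zero[of u] by (smt (verit) tan_zero)
      thus ?thesis using False mu_bd x0 unfolding v_def by (smt (verit) mult_pos_neg)
    qed
    have F: "(u + tan u) - (u_asy + tan u_asy) = (tan v - v) / x"
      using assms(13) tv x0 unfolding s_def v_def by (simp add: field_simps)
    have mono: "\<bar>u - u_asy\<bar> \<le> \<bar>(u + tan u) - (u_asy + tan u_asy)\<bar>"
    proof (cases "u \<le> u_asy")
      case True
      hence "tan u \<le> tan u_asy" using u1 ua by (intro tan_mono_le) auto
      thus ?thesis using True by auto
    next
      case False
      hence "tan u_asy \<le> tan u" using u1 ua by (intro tan_mono_le) auto
      thus ?thesis using False by auto
    qed
    have "\<bar>tan v - v\<bar> \<le> 2 * \<bar>v\<bar>^3"
      proof (intro tan_cube)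
      have "pi * x \<le> pi * (1/2)" using xle pi_gt3 by (intro mult_left_mono) auto
      thus "\<bar>v\<bar> \<le> pi / 4" using vbd by linarith
    qed
    also have "\<dots> \<le> 2 * (pi * x / 2)^3" using vbd by (intro mult_left_mono power_mono) auto
    finally have tvb: "\<bar>tan v - v\<bar> \<le> pi^3 * x^3 / 4" by (simp add: power_divide power_mult_distrib)
    have "\<bar>u - u_asy\<bar> \<le> \<bar>tan v - v\<bar> / x" using mono F x0 by simp
    also have "\<dots> \<le> (pi^3 * x^3 / 4) / x" using tvb x0 by (intro divide_right_mono) auto
    also have "\<dots> = pi^3 * x^2 / 4" using x0 by (simp add: power3_eq_cube power2_eq_square)
    finally have ud: "\<bar>u - u_asy\<bar> \<le> pi^3 * x^2 / 4" .
    have "\<bar>2 / a * (u - u_asy)\<bar> = 2 / a * \<bar>u - u_asy\<bar>" unfolding abs_mult using a0 by simp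
    also have "\<dots> \<le> 2 / a * (pi^3 * x^2 / 4)" using ud a0 by (intro mult_left_mono) auto
    also have "\<dots> \<le> pi ^ 3 / a * x ^ 2" using a0 by (simp add: field_simps)
    finally show ?thesis using diff by simp
  qed
qed

end
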